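(* Let $(X,\mathscr{R})$ be a reaction network with stoichiometric matrix $S$, and let $x,y\in X$. Then $x\rightleftharpoons y$ if and only if $m_x=m_y$ for all $m\in\ker S^\top$.
   Context: A reaction network (RN) $(X,\mathscr{R})$ consists of a finite non-empty set $X$ of species and a finite non-empty set $\mathscr{R}$ of reactions. Each reaction $r$ is given by stoichiometric coefficients $s^-_{xr},s^+_{xr}\in\mathbb{N}_0$. The stoichiometric matrix $S\in\mathbb{Z}^{X\times\mathscr{R}}$ has entries $S_{xr}=s^+_{xr}-s^-_{xr}$. The paper assumes throughout that RNs are closed: every reaction $r$ has $x,y$ with $S_{xr}<0<S_{yr}$. A vector $v\in\mathbb{Z}^{\mathscr{R}}$ specifies a net isomerization reaction $kx\to ky$ if both of the following hold: - $k:=-[Sv]_x=[Sv]_y$ is a positive integer, for some $x,y\in X$; - $[Sv]_z=0$ for all $z\in X\setminus\{x,y\}$. Distinct $x,y\in X$ are obligatory isomers if some $v\in\mathbb{Z}^{\mathscr{R}}$ specifies a net isomerization reaction $kx\to ky$. Write $x\rightleftharpoons y$ if $x=y$ or $x,y$ are obligatory isomers. *)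

theory Defs
  imports Complex_Main
begin

text \<open>A reaction network on species set X and reaction set R, given by
  stoichiometric coefficients sm (reactant side, s^-) and sp (product side, s^+).\<close>

definition reaction_network :: "'x set \<Rightarrow> 'r set \<Rightarrow> bool" where
  "reaction_network X R \<longleftrightarrow> finite X \<and> X \<noteq> {} \<and> finite R \<and> R \<noteq> {}"

definition stoich :: "('x \<Rightarrow> 'r \<Rightarrow> nat) \<Rightarrow> ('x \<Rightarrow> 'r \<Rightarrow> nat) \<Rightarrow> 'x \<Rightarrow> 'r \<Rightarrow> int" where
  "stoich sm sp x r = int (sp x r) - int (sm x r)"

definition closed_RN :: "'x set \<Rightarrow> 'r set \<Rightarrow> ('x \<Rightarrow> 'r \<Rightarrow> int) \<Rightarrow> bool" where
  "closed_RN X R S \<longleftrightarrow> (\<forall>r\<in>R. \<exists>x\<in>X. \<exists>y\<in>X. S x r < 0 \<and> 0 < S y r)"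

definition mat_vec :: "'r set \<Rightarrow> ('x \<Rightarrow> 'r \<Rightarrow> int) \<Rightarrow> ('r \<Rightarrow> int) \<Rightarrow> 'x \<Rightarrow> int" where
  "mat_vec R S v x = (\<Sum>r\<in>R. S x r * v r)"

text \<open>v specifies the net isomerization reaction k x \<rightarrow> k y\<close>
definition specifies_iso ::
  "'x set \<Rightarrow> 'r set \<Rightarrow> ('x \<Rightarrow> 'r \<Rightarrow> int) \<Rightarrow> ('r \<Rightarrow> int) \<Rightarrow> int \<Rightarrow> 'x \<Rightarrow> 'x \<Rightarrow> bool" where
  "specifies_iso X R S v k x y \<longleftrightarrow>
     k = - mat_vec R S v x \<and> k = mat_vec R S v y \<and> k > 0 \<and>
     (\<forall>z\<in>X - {x, y}. mat_vec R S v z = 0)"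

definition obligatory_isomers ::
  "'x set \<Rightarrow> 'r set \<Rightarrow> ('x \<Rightarrow> 'r \<Rightarrow> int) \<Rightarrow> 'x \<Rightarrow> 'x \<Rightarrow> bool" where
  "obligatory_isomers X R S x y \<longleftrightarrow> x \<noteq> y \<and> (\<exists>v k. specifies_iso X R S v k x y)"

definition iso_rel :: "'x set \<Rightarrow> 'r set \<Rightarrow> ('x \<Rightarrow> 'r \<Rightarrow> int) \<Rightarrow> 'x \<Rightarrow> 'x \<Rightarrow> bool" where
  "iso_rel X R S x y \<longleftrightarrow> x = y \<or> obligatory_isomers X R S x y"

definition in_left_kernel :: "'x set \<Rightarrow> 'r set \<Rightarrow> ('x \<Rightarrow> 'r \<Rightarrow> int) \<Rightarrow> ('x \<Rightarrow> real) \<Rightarrow> bool" where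
  "in_left_kernel X R S m \<longleftrightarrow> (\<forall>r\<in>R. (\<Sum>x\<in>X. m x * real_of_int (S x r)) = 0)"

end

theory Submission
  imports Defs
begin

lemma fredholm:
  fixes c :: "'r \<Rightarrow> 'x \<Rightarrow> 'a::field"
  assumes "finite X" "finite R"
  shows "(\<exists>w. \<forall>z\<in>X. b z = (\<Sum>r\<in>R. w r * c r z)) \<or>
         (\<exists>m. (\<forall>r\<in>R. (\<Sum>z\<in>X. m z * c r z) = 0) \<and> (\<Sum>z\<in>X. m z * b z) \<noteq> 0)"
  using assms(2)
proof (induction R arbitrary: b rule: finite_induct)
  case empty
  show ?case
  proof (cases "\<forall>z\<in>X. b z = 0")
    case True then show ?thesis by simp
  next
    case False
    then obtain z0 where z0: "z0 \<in> X" "b z0 \<noteq> 0" by blast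
    have "(\<Sum>z\<in>X. (if z = z0 then 1 else 0) * b z) = b z0"
    proof -
      have "(\<Sum>z\<in>X. (if z = z0 then 1 else 0) * b z) = (\<Sum>z\<in>X. if z = z0 then b z else 0)"
        by (intro sum.cong) auto
      then show ?thesis using z0 assms(1) by simp
    qed
    then show ?thesis using z0 by (intro disjI2 exI[of _ "\<lambda>z. if z = z0 then 1 else 0"]) simp
  qed
next
  case (insert r R)
  show ?case
  proof (cases "\<exists>u. \<forall>z\<in>X. c r z = (\<Sum>s\<in>R. u s * c s z)")
    case True
    then obtain u where u: "\<forall>z\<in>X. c r z = (\<Sum>s\<in>R. u s * c s z)" by blast
    from insert.IH[of b] show ?thesis
    proof
      assume "\<exists>w. \<forall>z\<in>X. b z = (\<Sum>r\<in>R. w r * c r z)"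
      then obtain w where w: "\<forall>z\<in>X. b z = (\<Sum>r\<in>R. w r * c r z)" by blast
      have "\<forall>z\<in>X. b z = (\<Sum>s\<in>insert r R. (w(r:=0)) s * c s z)"
      proof
        fix z assume "z \<in> X"
        have "(\<Sum>s\<in>R. (w(r:=0)) s * c s z) = (\<Sum>s\<in>R. w s * c s z)"
          using insert.hyps(2) by (intro sum.cong) auto
        then show "b z = (\<Sum>s\<in>insert r R. (w(r:=0)) s * c s z)"
          using insert.hyps w \<open>z \<in> X\<close> by simp
      qed
      then show ?thesis by blast
    next
      assume "\<exists>m. (\<forall>r\<in>R. (\<Sum>z\<in>X. m z * c r z) = 0) \<and> (\<Sum>z\<in>X. m z * b z) \<noteq> 0"
      then obtain m where m: "\<forall>r\<in>R. (\<Sum>z\<in>X. m z * c r z) = 0" "(\<Sum>z\<in>X. m z * b z) \<noteq> 0" by blast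
      have "(\<Sum>z\<in>X. m z * c r z) = (\<Sum>z\<in>X. m z * (\<Sum>s\<in>R. u s * c s z))"
        using u by (intro sum.cong) auto
      also have "\<dots> = (\<Sum>s\<in>R. u s * (\<Sum>z\<in>X. m z * c s z))"
        by (simp add: sum_distrib_left sum.swap[of _ X] algebra_simps)
      also have "\<dots> = 0" using m(1) by simp
      finally show ?thesis using m by (intro disjI2 exI[of _ m]) simp
    qed
  next
    case False
    from insert.IH[of "c r"] False obtain m1 where
      m1: "\<forall>s\<in>R. (\<Sum>z\<in>X. m1 z * c s z) = 0" "(\<Sum>z\<in>X. m1 z * c r z) \<noteq> 0" by blast
    define t where "t = (\<Sum>z\<in>X. m1 z * b z) / (\<Sum>z\<in>X. m1 z * c r z)"
    from insert.IH[of "\<lambda>z. b z - t * c r z"] show ?thesis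
    proof
      assume "\<exists>w. \<forall>z\<in>X. b z - t * c r z = (\<Sum>r\<in>R. w r * c r z)"
      then obtain w where w: "\<forall>z\<in>X. b z - t * c r z = (\<Sum>r\<in>R. w r * c r z)" by blast
      have "\<forall>z\<in>X. b z = (\<Sum>s\<in>insert r R. (w(r:=t)) s * c s z)"
      proof
        fix z assume "z \<in> X"
        have "(\<Sum>s\<in>R. (w(r:=t)) s * c s z) = (\<Sum>s\<in>R. w s * c s z)"
          using insert.hyps(2) by (intro sum.cong) auto
        then show "b z = (\<Sum>s\<in>insert r R. (w(r:=t)) s * c s z)"
          using insert.hyps w \<open>z \<in> X\<close> by (simp add: algebra_simps)
      qed
      then show ?thesis by blast
    next
      assume "\<exists>m. (\<forall>r\<in>R. (\<Sum>z\<in>X. m z * c r z) = 0) \<and> (\<Sum>z\<in>X. m z * (b z - t * c r z)) \<noteq> 0"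
      then obtain m2 where m2: "\<forall>s\<in>R. (\<Sum>z\<in>X. m2 z * c s z) = 0"
        "(\<Sum>z\<in>X. m2 z * (b z - t * c r z)) \<noteq> 0" by blast
      define A where "A = (\<Sum>z\<in>X. m1 z * c r z)"
      define B where "B = (\<Sum>z\<in>X. m2 z * c r z)"
      define P where "P = (\<Sum>z\<in>X. m1 z * b z)"
      define Q where "Q = (\<Sum>z\<in>X. m2 z * b z)"
      define \<alpha> where "\<alpha> = B / A"
      define m where "m = (\<lambda>z. m2 z - \<alpha> * m1 z)"
      have lin: "(\<Sum>z\<in>X. m z * f z) = (\<Sum>z\<in>X. m2 z * f z) - \<alpha> * (\<Sum>z\<in>X. m1 z * f z)" for f
        unfolding m_def by (simp add: algebra_simps sum_subtractf sum_distrib_left)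
      have A0: "A \<noteq> 0" using m1 A_def by simp
      have "\<forall>s\<in>insert r R. (\<Sum>z\<in>X. m z * c s z) = 0"
      proof
        fix s assume "s \<in> insert r R"
        then show "(\<Sum>z\<in>X. m z * c s z) = 0"
        proof
          assume "s = r" then show ?thesis using lin[of "c r"] A0
            by (simp add: A_def[symmetric] B_def[symmetric] \<alpha>_def)
        next
          assume "s \<in> R" then show ?thesis using lin[of "c s"] m1 m2 by simp
        qed
      qed
      moreover have "(\<Sum>z\<in>X. m z * b z) \<noteq> 0"
      proof -
        have e: "(\<Sum>z\<in>X. m2 z * (b z - t * c r z)) = Q - t * B"
          unfolding Q_def B_def by (simp add: algebra_simps sum_subtractf sum_distrib_left)
        have "(\<Sum>z\<in>X. m z * b z) = Q - \<alpha> * P"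
          using lin[of b] by (simp add: P_def Q_def)
        also have "\<dots> = Q - t * B" using A0 unfolding \<alpha>_def t_def A_def[symmetric] P_def[symmetric]
          by (simp add: field_simps)
        finally show ?thesis using m2(2) e by simp
      qed
      ultimately show ?thesis by blast
    qed
  qed
qed

theorem theorem6:
  fixes X :: "'x set" and R :: "'r set" and sm sp :: "'x \<Rightarrow> 'r \<Rightarrow> nat" and x y :: 'x
  assumes "reaction_network X R"
    and "closed_RN X R (stoich sm sp)"
    and "x \<in> X" and "y \<in> X"
  shows "iso_rel X R (stoich sm sp) x y \<longleftrightarrow>
         (\<forall>m. in_left_kernel X R (stoich sm sp) m \<longrightarrow> m x = m y)"
proof -
  let ?S = "stoich sm sp"
  have fX: "finite X" and fR: "finite R" using assms(1) unfolding reaction_network_def by auto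
  show ?thesis
  proof
    assume "iso_rel X R ?S x y"
    show "\<forall>m. in_left_kernel X R ?S m \<longrightarrow> m x = m y"
    proof (intro allI impI)
      fix m assume mk: "in_left_kernel X R ?S m"
      show "m x = m y"
      proof (cases "x = y")
        case True then show ?thesis by simp
      next
        case False
        with \<open>iso_rel X R ?S x y\<close> obtain v k where sv: "specifies_iso X R ?S v k x y"
          unfolding iso_rel_def obligatory_isomers_def by blast
        have "(\<Sum>z\<in>X. m z * real_of_int (mat_vec R ?S v z))
              = (\<Sum>z\<in>X. \<Sum>r\<in>R. m z * real_of_int (?S z r) * real_of_int (v r))"
          unfolding mat_vec_def by (simp add: sum_distrib_left algebra_simps)
        also have "\<dots> = (\<Sum>r\<in>R. real_of_int (v r) * (\<Sum>z\<in>X. m z * real_of_int (?S z r)))"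
          by (subst sum.swap) (simp add: sum_distrib_left algebra_simps)
        also have "\<dots> = 0" using mk unfolding in_left_kernel_def by simp
        finally have s0: "(\<Sum>z\<in>X. m z * real_of_int (mat_vec R ?S v z)) = 0" .
        have "(\<Sum>z\<in>X. m z * real_of_int (mat_vec R ?S v z))
            = (\<Sum>z\<in>X. (if z = x then - m x * real_of_int k else 0) + (if z = y then m y * real_of_int k else 0))"
        proof (intro sum.cong refl)
          fix z assume "z \<in> X"
          have mx: "mat_vec R ?S v x = - k" and my: "mat_vec R ?S v y = k"
            and mz: "\<forall>z\<in>X - {x, y}. mat_vec R ?S v z = 0"
            using sv unfolding specifies_iso_def by auto
          show "m z * real_of_int (mat_vec R ?S v z) = (if z = x then - m x * real_of_int k else 0) + (if z = y then m y * real_of_int k else 0)"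
            using mx my mz False \<open>z \<in> X\<close> by (cases "z = x"; cases "z = y") auto
        qed
        also have "\<dots> = - m x * real_of_int k + m y * real_of_int k"
          using assms(3,4) fX by (simp add: sum.distrib)
        finally have "(m y - m x) * real_of_int k = 0" using s0 by (auto simp: algebra_simps)
        moreover have "k > 0" using sv unfolding specifies_iso_def by simp
        ultimately show ?thesis by auto
      qed
    qed
  next
    assume H: "\<forall>m. in_left_kernel X R ?S m \<longrightarrow> m x = m y"
    show "iso_rel X R ?S x y"
    proof (cases "x = y")
      case True then show ?thesis unfolding iso_rel_def by simp
    next
      case False
      define b :: "'x \<Rightarrow> rat" where "b z = (if z = y then 1 else 0) - (if z = x then 1 else 0)" for z
      define c :: "'r \<Rightarrow> 'x \<Rightarrow> rat" where "c r z = of_int (?S z r)" for r z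
      from fredholm[OF fX fR, of b c] show ?thesis
      proof
        assume "\<exists>m. (\<forall>r\<in>R. (\<Sum>z\<in>X. m z * c r z) = 0) \<and> (\<Sum>z\<in>X. m z * b z) \<noteq> 0"
        then obtain m where m: "\<forall>r\<in>R. (\<Sum>z\<in>X. m z * c r z) = 0" "(\<Sum>z\<in>X. m z * b z) \<noteq> 0" by blast
        have "in_left_kernel X R ?S (\<lambda>z. of_rat (m z))"
          unfolding in_left_kernel_def
        proof
          fix r assume "r \<in> R"
          have "(\<Sum>z\<in>X. of_rat (m z) * real_of_int (?S z r)) = of_rat (\<Sum>z\<in>X. m z * c r z)"
            unfolding c_def by (simp add: of_rat_sum of_rat_mult)
          then show "(\<Sum>z\<in>X. of_rat (m z) * real_of_int (?S z r)) = 0" using m(1) \<open>r \<in> R\<close> by simp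
        qed
        with H have "m x = m y" by auto
        moreover have "(\<Sum>z\<in>X. m z * b z) = m y - m x"
        proof -
          have "(\<Sum>z\<in>X. m z * b z) = (\<Sum>z\<in>X. (if z = y then m z else 0) - (if z = x then m z else 0))"
            unfolding b_def by (intro sum.cong) auto
          also have "\<dots> = m y - m x" using assms(3,4) fX by (simp add: sum_subtractf)
          finally show ?thesis .
        qed
        ultimately show ?thesis using m(2) by simp
      next
        assume "\<exists>w. \<forall>z\<in>X. b z = (\<Sum>r\<in>R. w r * c r z)"
        then obtain w where w: "\<forall>z\<in>X. b z = (\<Sum>r\<in>R. w r * c r z)" by blast
        define d where "d = (\<Prod>r\<in>R. snd (quotient_of (w r)))"
        have dpos: "d > 0" unfolding d_def by (intro prod_pos) (simp add: quotient_of_denom_pos')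
        have "\<forall>r\<in>R. \<exists>n. of_int n = of_int d * w r"
        proof
          fix r assume r: "r \<in> R"
          obtain p q where pq: "quotient_of (w r) = (p, q)" by (cases "quotient_of (w r)")
          have wr: "w r = of_int p / of_int q" using quotient_of_div[OF pq] .
          have q0: "q > 0" using quotient_of_denom_pos[OF pq] .
          have "d = q * (\<Prod>s\<in>R - {r}. snd (quotient_of (w s)))"
            unfolding d_def using prod.remove[OF fR r, of "\<lambda>s. snd (quotient_of (w s))"] pq by simp
          then have "of_int d * w r = of_int (p * (\<Prod>s\<in>R - {r}. snd (quotient_of (w s))))"
            using q0 wr by simp
          then show "\<exists>n. of_int n = of_int d * w r" by metis
        qed
        then obtain v where v: "\<forall>r\<in>R. of_int (v r) = of_int d * w r" by metis
        have mv: "of_int (mat_vec R ?S v z) = of_int d * b z" if "z \<in> X" for z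
        proof -
          have "(of_int (mat_vec R ?S v z) :: rat) = (\<Sum>r\<in>R. c r z * (of_int d * w r))"
            unfolding mat_vec_def c_def using v by (simp add: of_int_sum)
          also have "\<dots> = of_int d * (\<Sum>r\<in>R. w r * c r z)"
            by (simp add: sum_distrib_left algebra_simps)
          finally show ?thesis using w that by simp
        qed
        have "mat_vec R ?S v x = - d"
          using mv[OF assms(3)] False unfolding b_def by (simp del: of_int_mult add: of_int_eq_iff[symmetric])
        moreover have "mat_vec R ?S v y = d"
          using mv[OF assms(4)] False unfolding b_def by (simp del: of_int_mult add: of_int_eq_iff[symmetric])
        moreover have "\<forall>z\<in>X - {x, y}. mat_vec R ?S v z = 0"
        proof
          fix z assume z: "z \<in> X - {x, y}"
          then have "(of_int (mat_vec R ?S v z) :: rat) = 0" using mv unfolding b_def by auto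
          then show "mat_vec R ?S v z = 0" by simp
        qed
        ultimately have "specifies_iso X R ?S v d x y"
          unfolding specifies_iso_def using dpos by simp
        then show ?thesis unfolding iso_rel_def obligatory_isomers_def using False by blast
      qed
    qed
  qed
qed

end
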